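(* Let $S$ be a monoid and $G_1,G_2$ left $S$-acts such that there exist sets $I,J$ and injective homomorphisms $G_1\rightarrowtail G_2^I$ and $G_2\rightarrowtail G_1^J$. Then $G_1$ and $G_2$ are geometrically equivalent.
   Context: A left $S$-act is a nonempty set with an action $S\times A\to A$ satisfying $1a=a$, $(st)a=s(ta)$; homomorphisms preserve the action; $G^I$ is the cartesian power with componentwise action. For a nonempty finite set $X$, $F_X=\coprod_{x\in X}S_x$ is the free $S$-act on $X$. For an $S$-act $G$ and a relation $T\subseteq F_X\times F_X$, $T'_G=\{\mu:F_X\to G \text{ homomorphism}: T\subseteq\ker\mu\}$ and $T''_G=\bigcap_{\mu\in T'_G}\ker\mu$ (empty intersection $=F_X\times F_X$). $S$-acts $G_1,G_2$ are geometrically equivalent iff $T''_{G_1}=T''_{G_2}$ for all nonempty finite $X$ and all $T\subseteq F_X\times F_X$. *)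

theory Defs
  imports "HOL-Library.FuncSet"
begin

definition is_act :: "'a set \<Rightarrow> ('s::monoid_mult \<Rightarrow> 'a \<Rightarrow> 'a) \<Rightarrow> bool" where
  "is_act A act \<longleftrightarrow> A \<noteq> {} \<and> (\<forall>s. \<forall>a\<in>A. act s a \<in> A)
     \<and> (\<forall>a\<in>A. act 1 a = a) \<and> (\<forall>s t. \<forall>a\<in>A. act (s * t) a = act s (act t a))"

definition act_hom :: "'a set \<Rightarrow> ('s::monoid_mult \<Rightarrow> 'a \<Rightarrow> 'a) \<Rightarrow> 'b set \<Rightarrow> ('s \<Rightarrow> 'b \<Rightarrow> 'b)
    \<Rightarrow> ('a \<Rightarrow> 'b) \<Rightarrow> bool" where
  "act_hom A act B act' f \<longleftrightarrow> (\<forall>a\<in>A. f a \<in> B) \<and> (\<forall>s. \<forall>a\<in>A. f (act s a) = act' s (f a))"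

definition pow_carrier :: "'i set \<Rightarrow> 'a set \<Rightarrow> ('i \<Rightarrow> 'a) set" where
  "pow_carrier I A = (\<Pi>\<^sub>E i\<in>I. A)"

definition pow_act :: "'i set \<Rightarrow> ('s \<Rightarrow> 'a \<Rightarrow> 'a) \<Rightarrow> 's \<Rightarrow> ('i \<Rightarrow> 'a) \<Rightarrow> ('i \<Rightarrow> 'a)" where
  "pow_act I act s g = (\<lambda>i\<in>I. act s (g i))"

text \<open>Free act F_X on X: the pair (x, s) stands for the element s x of the copy S_x.\<close>

definition free_carrier :: "'x set \<Rightarrow> ('x \<times> 's) set" where
  "free_carrier X = X \<times> UNIV"

definition free_act :: "'s::monoid_mult \<Rightarrow> ('x \<times> 's) \<Rightarrow> ('x \<times> 's)" where
  "free_act t p = (fst p, t * snd p)"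

definition ker_on :: "'a set \<Rightarrow> ('a \<Rightarrow> 'b) \<Rightarrow> ('a \<times> 'a) set" where
  "ker_on A f = {(a, b). a \<in> A \<and> b \<in> A \<and> f a = f b}"

definition T_prime :: "'x set \<Rightarrow> (('x \<times> 's::monoid_mult) \<times> ('x \<times> 's)) set
    \<Rightarrow> 'a set \<Rightarrow> ('s \<Rightarrow> 'a \<Rightarrow> 'a) \<Rightarrow> (('x \<times> 's) \<Rightarrow> 'a) set" where
  "T_prime X T A act = {\<mu>. act_hom (free_carrier X) free_act A act \<mu> \<and> T \<subseteq> ker_on (free_carrier X) \<mu>}"

text \<open>T''_G: intersection of the kernels (empty intersection = F_X x F_X).\<close>

definition T_dprime :: "'x set \<Rightarrow> (('x \<times> 's::monoid_mult) \<times> ('x \<times> 's)) set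
    \<Rightarrow> 'a set \<Rightarrow> ('s \<Rightarrow> 'a \<Rightarrow> 'a) \<Rightarrow> (('x \<times> 's) \<times> ('x \<times> 's)) set" where
  "T_dprime X T A act = (free_carrier X \<times> free_carrier X) \<inter>
      (\<Inter>\<mu>\<in>T_prime X T A act. ker_on (free_carrier X) \<mu>)"

definition geom_equiv :: "'a set \<Rightarrow> ('s::monoid_mult \<Rightarrow> 'a \<Rightarrow> 'a) \<Rightarrow> 'b set \<Rightarrow> ('s \<Rightarrow> 'b \<Rightarrow> 'b) \<Rightarrow> bool" where
  "geom_equiv A1 act1 A2 act2 \<longleftrightarrow>
     (\<forall>X :: nat set. finite X \<and> X \<noteq> {} \<longrightarrow>
        (\<forall>T. T \<subseteq> free_carrier X \<times> free_carrier X \<longrightarrow>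
           T_dprime X T A1 act1 = T_dprime X T A2 act2))"

end

theory Submission
  imports Defs
begin

lemma dprime_sub:
  fixes A1 :: "'a set" and act1 :: "'s::monoid_mult \<Rightarrow> 'a \<Rightarrow> 'a"
    and A2 :: "'b set" and act2 :: "'s \<Rightarrow> 'b \<Rightarrow> 'b"
    and I :: "'i set" and f :: "'a \<Rightarrow> ('i \<Rightarrow> 'b)"
    and X :: "'x set"
  assumes hf: "act_hom A1 act1 (pow_carrier I A2) (pow_act I act2) f" and inj: "inj_on f A1"
  shows "T_dprime X T A2 act2 \<subseteq> T_dprime X T A1 act1"
proof
  fix pq assume pq: "pq \<in> T_dprime X T A2 act2"
  obtain p q where pqd: "pq = (p, q)" by (cases pq) blast
  have pF: "p \<in> free_carrier X" and qF: "q \<in> free_carrier X"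
    using pq pqd unfolding T_dprime_def by auto
  have "(p, q) \<in> ker_on (free_carrier X) \<mu>" if mu: "\<mu> \<in> T_prime X T A1 act1" for \<mu>
  proof -
    have hm: "act_hom (free_carrier X) free_act A1 act1 \<mu>" and Tk: "T \<subseteq> ker_on (free_carrier X) \<mu>"
      using mu unfolding T_prime_def by auto
    have comp: "f (\<mu> p) i = f (\<mu> q) i" if iI: "i \<in> I" for i
    proof -
      let ?m = "\<lambda>r. f (\<mu> r) i"
      have "?m \<in> T_prime X T A2 act2"
        unfolding T_prime_def
      proof (intro CollectI conjI)
        show "act_hom (free_carrier X) free_act A2 act2 ?m"
          unfolding act_hom_def
        proof (intro conjI ballI allI)
          fix r :: "'x \<times> 's" assume r: "r \<in> free_carrier X"
          have "\<mu> r \<in> A1" using hm r unfolding act_hom_def by auto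
          hence "f (\<mu> r) \<in> pow_carrier I A2" using hf unfolding act_hom_def by auto
          thus "f (\<mu> r) i \<in> A2" using iI unfolding pow_carrier_def by auto
        next
          fix s :: 's and r :: "'x \<times> 's" assume r: "r \<in> free_carrier X"
          have m1: "\<mu> r \<in> A1" using hm r unfolding act_hom_def by auto
          have "\<mu> (free_act s r) = act1 s (\<mu> r)" using hm r unfolding act_hom_def by auto
          hence "f (\<mu> (free_act s r)) = pow_act I act2 s (f (\<mu> r))"
            using hf m1 unfolding act_hom_def by auto
          thus "f (\<mu> (free_act s r)) i = act2 s (f (\<mu> r) i)"
            using iI unfolding pow_act_def by auto
        qed
        show "T \<subseteq> ker_on (free_carrier X) ?m"
          using Tk unfolding ker_on_def by auto
      qed
      hence "(p, q) \<in> ker_on (free_carrier X) ?m" using pq pqd unfolding T_dprime_def by auto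
      thus ?thesis unfolding ker_on_def by auto
    qed
    have m1: "\<mu> p \<in> A1" "\<mu> q \<in> A1" using hm pF qF unfolding act_hom_def by auto
    hence e: "f (\<mu> p) \<in> (\<Pi>\<^sub>E i\<in>I. A2)" "f (\<mu> q) \<in> (\<Pi>\<^sub>E i\<in>I. A2)"
      using hf unfolding act_hom_def pow_carrier_def by auto
    have "f (\<mu> p) = f (\<mu> q)"
    proof
      fix i show "f (\<mu> p) i = f (\<mu> q) i"
        using comp e by (cases "i \<in> I") (auto simp: PiE_def extensional_def)
    qed
    hence "\<mu> p = \<mu> q" using inj m1 by (auto dest: inj_onD)
    thus ?thesis using pF qF unfolding ker_on_def by auto
  qed
  thus "pq \<in> T_dprime X T A1 act1" using pF qF pqd unfolding T_dprime_def by auto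
qed

theorem corollary3p5:
  fixes A1 :: "'a set" and act1 :: "'s::monoid_mult \<Rightarrow> 'a \<Rightarrow> 'a"
    and A2 :: "'b set" and act2 :: "'s \<Rightarrow> 'b \<Rightarrow> 'b"
    and I :: "'i set" and J :: "'j set"
    and f :: "'a \<Rightarrow> ('i \<Rightarrow> 'b)" and g :: "'b \<Rightarrow> ('j \<Rightarrow> 'a)"
  assumes "is_act A1 act1" and "is_act A2 act2"
    and "act_hom A1 act1 (pow_carrier I A2) (pow_act I act2) f" and "inj_on f A1"
    and "act_hom A2 act2 (pow_carrier J A1) (pow_act J act1) g" and "inj_on g A2"
  shows "geom_equiv A1 act1 A2 act2"
  unfolding geom_equiv_def
  using dprime_sub[OF assms(3,4)] dprime_sub[OF assms(5,6)]
  by (intro allI impI equalityI) blast+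

end
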